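(* Let $M$ be a von Neumann algebra and $\{b_j\}_{j\ge1}$ a sequence of positive elements of $M$ such that (i) $R_{b_i}R_{b_j}=0$ whenever $|i-j|>1$; (ii) each $b_j$ is a sum of $N_j$ projections in $M$; (iii) $N:=\sup_jN_j<\infty$. Then $b:=\sum_{j=1}^\infty b_j$ converges in the strong operator topology and $b$ is a sum of $2N$ projections in $M$.
   Context: $R_x$ denotes the range projection of $x$. *)

theory Defs
  imports Complex_Main
begin

text \<open>Complex Hilbert spaces (inner product linear in the second argument),
  developed from scratch since HOL-Analysis only has real inner product spaces.\<close>

class chilbert = ab_group_add +
  fixes cscale :: "complex \<Rightarrow> 'a \<Rightarrow> 'a"
    and cinner :: "'a \<Rightarrow> 'a \<Rightarrow> complex"
  assumes cscale_add_right: "cscale a (x + y) = cscale a x + cscale a y"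
    and cscale_add_left: "cscale (a + b) x = cscale a x + cscale b x"
    and cscale_cscale: "cscale a (cscale b x) = cscale (a * b) x"
    and cscale_one: "cscale 1 x = x"
    and cinner_add_right: "cinner x (y + z) = cinner x y + cinner x z"
    and cinner_cscale_right: "cinner x (cscale a y) = a * cinner x y"
    and cinner_cnj: "cinner y x = cnj (cinner x y)"
    and cinner_nonneg: "0 \<le> Re (cinner x x)"
    and cinner_eq_zero: "cinner x x = 0 \<Longrightarrow> x = 0"
    and cinner_complete:
      "(\<forall>e>0. \<exists>K. \<forall>m\<ge>K. \<forall>n\<ge>K.
          sqrt (Re (cinner (f m - f n) (f m - f n))) < e)
       \<Longrightarrow> \<exists>l. (\<lambda>n. sqrt (Re (cinner (f n - l) (f n - l)))) \<longlonglongrightarrow> 0"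

definition hnorm :: "'a::chilbert \<Rightarrow> real" where
  "hnorm x = sqrt (Re (cinner x x))"

definition hclosure :: "'a::chilbert set \<Rightarrow> 'a set" where
  "hclosure S = {x. \<forall>e>0. \<exists>y\<in>S. hnorm (x - y) < e}"

definition bounded_op :: "('a::chilbert \<Rightarrow> 'a) \<Rightarrow> bool" where
  "bounded_op T \<longleftrightarrow>
     (\<forall>x y. T (x + y) = T x + T y) \<and> (\<forall>a x. T (cscale a x) = cscale a (T x)) \<and>
     (\<exists>K. \<forall>x. hnorm (T x) \<le> K * hnorm x)"

definition is_adjoint :: "('a::chilbert \<Rightarrow> 'a) \<Rightarrow> ('a \<Rightarrow> 'a) \<Rightarrow> bool" where
  "is_adjoint T S \<longleftrightarrow> (\<forall>x y. cinner (T x) y = cinner x (S y))"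

definition positive_op :: "('a::chilbert \<Rightarrow> 'a) \<Rightarrow> bool" where
  "positive_op T \<longleftrightarrow> bounded_op T \<and>
     (\<forall>x. Im (cinner x (T x)) = 0 \<and> 0 \<le> Re (cinner x (T x)))"

definition projection :: "('a::chilbert \<Rightarrow> 'a) \<Rightarrow> bool" where
  "projection P \<longleftrightarrow> bounded_op P \<and> P \<circ> P = P \<and> is_adjoint P P"

definition range_proj :: "('a::chilbert \<Rightarrow> 'a) \<Rightarrow> ('a \<Rightarrow> 'a)" where
  "range_proj T = (THE P. projection P \<and> range P = hclosure (range T))"

definition sot_closed :: "('a::chilbert \<Rightarrow> 'a) set \<Rightarrow> bool" where
  "sot_closed M \<longleftrightarrow> (\<forall>T. bounded_op T \<and>
      (\<forall>F e. finite F \<and> e > 0 \<longrightarrow> (\<exists>S\<in>M. \<forall>x\<in>F. hnorm (T x - S x) < e))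
      \<longrightarrow> T \<in> M)"

definition von_neumann_algebra :: "('a::chilbert \<Rightarrow> 'a) set \<Rightarrow> bool" where
  "von_neumann_algebra M \<longleftrightarrow>
     (\<forall>T\<in>M. bounded_op T) \<and> id \<in> M \<and>
     (\<forall>S\<in>M. \<forall>T\<in>M. (\<lambda>x. S x + T x) \<in> M) \<and>
     (\<forall>a. \<forall>T\<in>M. (\<lambda>x. cscale a (T x)) \<in> M) \<and>
     (\<forall>S\<in>M. \<forall>T\<in>M. S \<circ> T \<in> M) \<and>
     (\<forall>T\<in>M. \<exists>S\<in>M. is_adjoint T S) \<and>
     sot_closed M"

definition sum_of_projections :: "('a::chilbert \<Rightarrow> 'a) set \<Rightarrow> nat \<Rightarrow> ('a \<Rightarrow> 'a) \<Rightarrow> bool" where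
  "sum_of_projections M n b \<longleftrightarrow>
     (\<exists>P. (\<forall>k<n. P k \<in> M \<and> projection (P k)) \<and> b = (\<lambda>x. \<Sum>k<n. P k x))"

definition sot_sums :: "(nat \<Rightarrow> 'a::chilbert \<Rightarrow> 'a) \<Rightarrow> ('a \<Rightarrow> 'a) \<Rightarrow> bool" where
  "sot_sums b B \<longleftrightarrow> (\<forall>x. (\<lambda>n. hnorm ((\<Sum>j<n. b j x) - B x)) \<longlonglongrightarrow> 0)"

end

theory Submission
  imports Defs
begin


lemma cinner_add_left: "cinner (x + y) z = cinner x z + cinner y (z::'a::chilbert)"
  apply (subst (1 2 3) cinner_cnj) by (simp add: cinner_add_right)
lemma cinner_cscale_left: "cinner (cscale a x) (y::'a::chilbert) = cnj a * cinner x y"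
  apply (subst (1 2) cinner_cnj) by (simp add: cinner_cscale_right)
lemma cinner_zero_right[simp]: "cinner (x::'a::chilbert) 0 = 0"
  using cinner_add_right[of x 0 0] by simp
lemma cinner_zero_left[simp]: "cinner 0 (x::'a::chilbert) = 0"
  using cinner_add_left[of 0 0 x] by simp
lemma cinner_minus_right: "cinner (x::'a::chilbert) (- y) = - cinner x y"
proof -
  have "cinner x y + cinner x (-y) = 0" using cinner_add_right[of x y "-y"] by simp
  then show ?thesis by (simp add: eq_neg_iff_add_eq_0 add.commute)
qed
lemma cinner_minus_left: "cinner (- x) (y::'a::chilbert) = - cinner x y"
proof -
  have "cinner x y + cinner (-x) y = 0" using cinner_add_left[of x "-x" y] by simp
  then show ?thesis by (simp add: eq_neg_iff_add_eq_0 add.commute)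
qed
lemma cinner_diff_right: "cinner (x::'a::chilbert) (y - z) = cinner x y - cinner x z"
  using cinner_add_right[of x y "-z"] by (simp add: cinner_minus_right)
lemma cinner_diff_left: "cinner (x - y) (z::'a::chilbert) = cinner x z - cinner y z"
  using cinner_add_left[of x "-y" z] by (simp add: cinner_minus_left)
lemma cinner_sum_right: "cinner (x::'a::chilbert) (sum f A) = (\<Sum>i\<in>A. cinner x (f i))"
  by (induct A rule: infinite_finite_induct) (simp_all add: cinner_add_right)
lemma cinner_sum_left: "cinner (sum f A) (x::'a::chilbert) = (\<Sum>i\<in>A. cinner (f i) x)"
  by (induct A rule: infinite_finite_induct) (simp_all add: cinner_add_left)
lemma cscale_zero_left[simp]: "cscale 0 (x::'a::chilbert) = 0"
  using cscale_add_left[of 0 0 x] by simp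
lemma cscale_zero_right[simp]: "cscale a (0::'a::chilbert) = 0"
  using cscale_add_right[of a 0 0] by simp
lemma cscale_minus_right: "cscale a (- x::'a::chilbert) = - cscale a x"
proof -
  have "cscale a x + cscale a (-x) = 0" using cscale_add_right[of a x "-x"] by simp
  then show ?thesis by (simp add: eq_neg_iff_add_eq_0 add.commute)
qed
lemma cscale_diff_right: "cscale a (x - y::'a::chilbert) = cscale a x - cscale a y"
  using cscale_add_right[of a x "-y"] by (simp add: cscale_minus_right)
lemma cscale_sum_right: "cscale a (sum f A::'a::chilbert) = (\<Sum>i\<in>A. cscale a (f i))"
  by (induct A rule: infinite_finite_induct) (simp_all add: cscale_add_right)

lemma cinner_self_Im[simp]: "Im (cinner x (x::'a::chilbert)) = 0"
proof -
  have "Im (cinner x x) = Im (cnj (cinner x x))" using cinner_cnj[of x x] by (rule arg_cong)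
  then show ?thesis by simp
qed
lemma cinner_self_real: "cinner x (x::'a::chilbert) = complex_of_real (Re (cinner x x))"
  by (simp add: complex_eq_iff)
lemma Re_cinner_commute: "Re (cinner y (x::'a::chilbert)) = Re (cinner x y)"
  by (subst cinner_cnj) simp
lemma Re_cinner_self_eq_0: "Re (cinner x (x::'a::chilbert)) = 0 \<longleftrightarrow> x = 0"
  using cinner_eq_zero[of x] cinner_self_Im[of x] by (auto simp: complex_eq_iff)
lemma hnorm_nonneg[simp]: "0 \<le> hnorm (x::'a::chilbert)"
  by (simp add: hnorm_def cinner_nonneg)
lemma hnorm_sq: "(hnorm x)^2 = Re (cinner x x)"
  by (simp add: hnorm_def cinner_nonneg)
lemma hnorm_eq_0[simp]: "hnorm (x::'a::chilbert) = 0 \<longleftrightarrow> x = 0"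
  by (simp add: hnorm_def Re_cinner_self_eq_0 cinner_nonneg)
lemma hnorm_zero[simp]: "hnorm (0::'a::chilbert) = 0" by simp

lemma cinner_ext: "(\<And>z. cinner z x = cinner z (y::'a::chilbert)) \<Longrightarrow> x = y"
proof -
  assume h: "\<And>z. cinner z x = cinner z y"
  have "cinner (x - y) (x - y) = 0" using h[of "x-y"] by (simp add: cinner_diff_right)
  then show ?thesis using cinner_eq_zero by force
qed

lemma expand_diff: "Re (cinner (x - cscale (complex_of_real t) y) (x - cscale (complex_of_real t) y))
   = Re (cinner x x) - 2 * t * Re (cinner x y) + t^2 * Re (cinner y (y::'a::chilbert))"
  apply (simp add: cinner_diff_left cinner_diff_right cinner_cscale_left cinner_cscale_right Re_cinner_commute[of y x])
  apply (simp add: power2_eq_square algebra_simps)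
  done

lemma expand_add: "Re (cinner (x + y) (x + y)) = Re (cinner x x) + 2 * Re (cinner x y) + Re (cinner y (y::'a::chilbert))"
  by (simp add: cinner_add_left cinner_add_right Re_cinner_commute[of y x])

lemma cs_Re: "Re (cinner x (y::'a::chilbert)) \<le> hnorm x * hnorm y"
proof (cases "y = 0")
  case True then show ?thesis by simp
next
  case False
  define A where "A = Re (cinner x x)"
  define B where "B = Re (cinner x y)"
  define C where "C = Re (cinner y y)"
  have C: "C > 0" using False cinner_nonneg[of y] Re_cinner_self_eq_0[of y] unfolding C_def by linarith
  have "0 \<le> A - 2 * (B/C) * B + (B/C)^2 * C"
    using expand_diff[of x "B/C" y] cinner_nonneg[of "x - cscale (complex_of_real (B/C)) y"]
    unfolding A_def B_def C_def by linarith
  also have "\<dots> = A - B^2 / C" using C by (simp add: power2_eq_square field_simps)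
  finally have "B^2 \<le> A * C" using C by (simp add: field_simps)
  then have "\<bar>B\<bar> \<le> sqrt (A*C)" using real_sqrt_le_mono[OF \<open>B^2 \<le> A * C\<close>] by simp
  then show ?thesis unfolding hnorm_def A_def B_def C_def by (simp add: real_sqrt_mult)
qed

lemma hnorm_triangle: "hnorm (x + y) \<le> hnorm x + hnorm (y::'a::chilbert)"
proof -
  have e: "(hnorm (x+y))^2 = (hnorm x)^2 + 2 * Re (cinner x y) + (hnorm y)^2"
    unfolding hnorm_sq by (rule expand_add)
  have f: "(hnorm x + hnorm y)^2 = (hnorm x)^2 + 2*(hnorm x * hnorm y) + (hnorm y)^2"
    by (simp add: power2_eq_square algebra_simps)
  have "(hnorm (x+y))^2 \<le> (hnorm x + hnorm y)^2"
    unfolding e f using cs_Re[of x y] by linarith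
  then show ?thesis by (rule power2_le_imp_le) simp
qed

lemma hnorm_minus: "hnorm (- x) = hnorm (x::'a::chilbert)"
  by (simp add: hnorm_def cinner_minus_left cinner_minus_right)
lemma hnorm_commute: "hnorm (x - y) = hnorm (y - (x::'a::chilbert))"
  using hnorm_minus[of "x - y"] by simp
lemma hnorm_triangle_diff: "hnorm (x - z) \<le> hnorm (x - y) + hnorm (y - (z::'a::chilbert))"
  using hnorm_triangle[of "x-y" "y-z"] by simp

lemma hnorm_cscale: "hnorm (cscale a x) = cmod a * hnorm (x::'a::chilbert)"
proof -
  obtain r where r: "cinner x x = complex_of_real r" using cinner_self_real by blast
  have "cinner (cscale a x) (cscale a x) = (a * cnj a) * cinner x x"
    by (simp add: cinner_cscale_left cinner_cscale_right mult.commute mult.left_commute)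
  also have "\<dots> = complex_of_real ((cmod a)^2 * r)" by (simp add: complex_norm_square[symmetric] r)
  finally have "Re (cinner (cscale a x) (cscale a x)) = (cmod a)^2 * Re (cinner x x)" using r by simp
  then show ?thesis by (simp add: hnorm_def real_sqrt_mult)
qed

lemma cs: "cmod (cinner x (y::'a::chilbert)) \<le> hnorm x * hnorm y"
proof (cases "cinner x y = 0")
  case True then show ?thesis by simp
next
  case False
  define c where "c = cinner x y"
  define a where "a = cnj c / complex_of_real (cmod c)"
  have c0: "cmod c \<noteq> 0" using False c_def by simp
  have ca: "cmod a = 1" using False unfolding a_def c_def by (simp add: norm_divide)
  have "a * c = (c * cnj c) / complex_of_real (cmod c)" unfolding a_def by (simp add: field_simps)
  also have "\<dots> = complex_of_real ((cmod c)^2 / cmod c)" by (simp add: complex_norm_square[symmetric])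
  also have "\<dots> = complex_of_real (cmod c)" using c0 by (simp add: power2_eq_square)
  finally have "Re (cinner x (cscale a y)) = cmod c"
    unfolding cinner_cscale_right c_def[symmetric] by simp
  with cs_Re[of x "cscale a y"] show ?thesis by (simp add: hnorm_cscale ca c_def)
qed

lemma hnorm_sum_le: "hnorm (sum f A) \<le> (\<Sum>i\<in>A. hnorm (f i::'a::chilbert))"
proof (induct A rule: infinite_finite_induct)
  case (insert a A) then show ?case using hnorm_triangle[of "f a" "sum f A"] by simp
qed simp_all



definition hconv :: "(nat \<Rightarrow> 'a::chilbert) \<Rightarrow> 'a \<Rightarrow> bool" where
  "hconv f l \<longleftrightarrow> (\<lambda>n. hnorm (f n - l)) \<longlonglongrightarrow> 0"

lemma real_squeeze:
  assumes "\<And>n. 0 \<le> u n" "\<And>n. u n \<le> v n" "v \<longlonglongrightarrow> 0"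
  shows "u \<longlonglongrightarrow> (0::real)"
  by (rule tendsto_sandwich[of "\<lambda>n. 0" u sequentially v]) (use assms in auto)

lemma norm_squeeze:
  assumes "\<And>n. norm (g n) \<le> v n" "v \<longlonglongrightarrow> 0"
  shows "g \<longlonglongrightarrow> (0::'b::real_normed_vector)"
  by (rule tendsto_norm_zero_cancel, rule real_squeeze[OF _ assms]) auto

lemma hconv_squeeze:
  assumes "\<And>n. hnorm (f n - l) \<le> g n" and "g \<longlonglongrightarrow> 0"
  shows "hconv f (l::'a::chilbert)"
  unfolding hconv_def
  by (rule real_squeeze[OF _ assms(1,2)]) simp

lemma hconv_unique:
  assumes "hconv f a" "hconv f (b::'a::chilbert)" shows "a = b"
proof -
  have le: "hnorm (a - b) \<le> hnorm (f n - a) + hnorm (f n - b)" for n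
    using hnorm_triangle_diff[of a b "f n"] hnorm_commute[of a "f n"] by linarith
  have lim: "(\<lambda>n. hnorm (f n - a) + hnorm (f n - b)) \<longlonglongrightarrow> 0 + 0"
    using assms unfolding hconv_def by (intro tendsto_add)
  have "hnorm (a - b) \<le> 0 + 0"
    by (rule LIMSEQ_le_const[OF lim]) (use le in auto)
  then show ?thesis using hnorm_nonneg[of "a-b"] by simp
qed

lemma hconv_const: "hconv (\<lambda>n. a) (a::'a::chilbert)"
  unfolding hconv_def by simp

lemma hconv_add:
  assumes "hconv f a" "hconv g (b::'a::chilbert)"
  shows "hconv (\<lambda>n. f n + g n) (a + b)"
proof (rule hconv_squeeze)
  fix n
  have "f n + g n - (a + b) = (f n - a) + (g n - b)" by (simp add: algebra_simps)
  then show "hnorm (f n + g n - (a + b)) \<le> hnorm (f n - a) + hnorm (g n - b)"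
    using hnorm_triangle by metis
  show "(\<lambda>n. hnorm (f n - a) + hnorm (g n - b)) \<longlonglongrightarrow> 0"
    using tendsto_add[OF assms[unfolded hconv_def]] by simp
qed

lemma hconv_sum:
  assumes "finite A" "\<And>k. k \<in> A \<Longrightarrow> hconv (f k) (l k)"
  shows "hconv (\<lambda>n. \<Sum>k\<in>A. f k n) (\<Sum>k\<in>A. (l k::'a::chilbert))"
  using assms
proof (induct A rule: finite_induct)
  case empty then show ?case by (simp add: hconv_const)
next
  case (insert a A)
  then have "hconv (\<lambda>n. f a n + (\<Sum>k\<in>A. f k n)) (l a + (\<Sum>k\<in>A. l k))"
    by (intro hconv_add) auto
  then show ?case using insert by simp
qed

lemma hconv_cong:
  assumes "hconv f l" "\<And>n. n \<ge> N \<Longrightarrow> f n = g n" shows "hconv g (l::'a::chilbert)"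
proof -
  have "eventually (\<lambda>n. hnorm (f n - l) = hnorm (g n - l)) sequentially"
    unfolding eventually_sequentially by (rule exI[of _ N]) (simp add: assms(2))
  then show ?thesis unfolding hconv_def by (rule Lim_transform_eventually[OF assms(1)[unfolded hconv_def]])
qed

lemma op_add: "bounded_op T \<Longrightarrow> T (x + y) = T x + T (y::'a::chilbert)"
  by (simp add: bounded_op_def)
lemma op_cscale: "bounded_op T \<Longrightarrow> T (cscale a x) = cscale a (T (x::'a::chilbert))"
  by (simp add: bounded_op_def)
lemma op_zero: "bounded_op T \<Longrightarrow> T 0 = (0::'a::chilbert)"
  using op_add[of T 0 0] by simp
lemma op_diff: "bounded_op T \<Longrightarrow> T (x - y) = T x - T (y::'a::chilbert)"
  using op_add[of T "x - y" y] by (simp add: eq_diff_eq)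
lemma op_sum: "bounded_op T \<Longrightarrow> T (sum f A) = (\<Sum>i\<in>A. T (f i::'a::chilbert))"
  by (induct A rule: infinite_finite_induct) (simp_all add: op_zero op_add)

lemma hconv_op:
  assumes T: "bounded_op T" and h: "hconv f (a::'a::chilbert)"
  shows "hconv (\<lambda>n. T (f n)) (T a)"
proof -
  obtain K where K: "\<And>x. hnorm (T x) \<le> K * hnorm x" using T unfolding bounded_op_def by blast
  show ?thesis
  proof (rule hconv_squeeze)
    fix n show "hnorm (T (f n) - T a) \<le> K * hnorm (f n - a)"
      using K[of "f n - a"] op_diff[OF T] by simp
    show "(\<lambda>n. K * hnorm (f n - a)) \<longlonglongrightarrow> 0"
      using tendsto_mult_right_zero[OF h[unfolded hconv_def], of K] by simp
  qed
qed

lemma hconv_cscale: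
  assumes h: "hconv f (a::'a::chilbert)"
  shows "hconv (\<lambda>n. cscale c (f n)) (cscale c a)"
proof (rule hconv_squeeze)
  fix n show "hnorm (cscale c (f n) - cscale c a) \<le> cmod c * hnorm (f n - a)"
    by (simp add: hnorm_cscale flip: cscale_diff_right)
  show "(\<lambda>n. cmod c * hnorm (f n - a)) \<longlonglongrightarrow> 0"
    using tendsto_mult_right_zero[OF h[unfolded hconv_def], of "cmod c"] by simp
qed

lemma hconv_cinner:
  assumes h: "hconv f (a::'a::chilbert)"
  shows "(\<lambda>n. cinner (f n) y) \<longlonglongrightarrow> cinner a y"
proof -
  have "(\<lambda>n. cinner (f n) y - cinner a y) \<longlonglongrightarrow> 0"
  proof (rule norm_squeeze)
    show "norm (cinner (f n) y - cinner a y) \<le> hnorm (f n - a) * hnorm y" for n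
      using cs[of "f n - a" y] by (simp add: cinner_diff_left)
    show "(\<lambda>n. hnorm (f n - a) * hnorm y) \<longlonglongrightarrow> 0"
      using tendsto_mult_left_zero[OF h[unfolded hconv_def], of "hnorm y"] by simp
  qed
  then show ?thesis by (rule LIM_zero_cancel)
qed

lemma hconv_norm_le:
  assumes h: "hconv f (a::'a::chilbert)" and le: "\<And>n. hnorm (f n) \<le> c"
  shows "hnorm a \<le> c"
proof -
  have "hnorm a \<le> c + hnorm (f n - a)" for n
    using hnorm_triangle_diff[of a 0 "f n"] le[of n] hnorm_commute[of "f n" a] hnorm_minus[of "f n"] by simp
  moreover have lim: "(\<lambda>n. c + hnorm (f n - a)) \<longlonglongrightarrow> c + 0"
    using h unfolding hconv_def by (intro tendsto_add) auto
  ultimately have "hnorm a \<le> c + 0" by (intro LIMSEQ_le_const[OF lim]) auto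
  then show ?thesis by simp
qed

lemma proj_bounded: "projection P \<Longrightarrow> bounded_op P"
  by (simp add: projection_def)
lemma proj_idem: "projection P \<Longrightarrow> P (P x) = P x"
  by (simp add: projection_def fun_eq_iff)
lemma proj_adj: "projection P \<Longrightarrow> cinner (P x) y = cinner x (P (y::'a::chilbert))"
  by (simp add: projection_def is_adjoint_def)
lemma proj_sq: "projection P \<Longrightarrow> cinner x (P x) = cinner (P x) (P (x::'a::chilbert))"
  using proj_adj[of P x "P x"] proj_idem[of P x] by simp



lemma sum_lessThan_diff:
  fixes f :: "nat \<Rightarrow> 'a::ab_group_add"
  assumes "m \<le> n" shows "(\<Sum>j<n. f j) - (\<Sum>j<m. f j) = (\<Sum>j\<in>{m..<n}. f j)"
  using sum_diff_nat_ivl[of 0 m n f] assms by (simp add: atLeast0LessThan)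

context
  fixes Q :: "nat \<Rightarrow> 'a::chilbert \<Rightarrow> 'a"
  assumes proj: "\<And>j. projection (Q j)"
    and orth: "\<And>i j x. i \<noteq> j \<Longrightarrow> Q i (Q j x) = 0"
begin

lemma Q_sum_delta: "i \<in> A \<Longrightarrow> finite A \<Longrightarrow> Q i (\<Sum>j\<in>A. Q j x) = Q i x"
proof -
  assume i: "i \<in> A" and fA: "finite A"
  have "Q i (\<Sum>j\<in>A. Q j x) = (\<Sum>j\<in>A. Q i (Q j x))" by (rule op_sum[OF proj_bounded[OF proj]])
  also have "\<dots> = (\<Sum>j\<in>A. if j = i then Q i x else 0)"
    by (rule sum.cong) (auto simp: orth proj_idem[OF proj])
  also have "\<dots> = Q i x" using i fA by (simp add: sum.delta')
  finally show ?thesis .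
qed

lemma Q_sum_notin: "i \<notin> A \<Longrightarrow> Q i (\<Sum>j\<in>A. Q j x) = 0"
proof -
  assume i: "i \<notin> A"
  have "Q i (\<Sum>j\<in>A. Q j x) = (\<Sum>j\<in>A. Q i (Q j x))" by (rule op_sum[OF proj_bounded[OF proj]])
  also have "\<dots> = 0"
  proof (intro sum.neutral ballI)
    fix j assume "j \<in> A" with i have "i \<noteq> j" by blast
    then show "Q i (Q j x) = 0" by (rule orth)
  qed
  finally show ?thesis .
qed

lemma Q_sum_sq:
  assumes fA: "finite A"
  shows "cinner (\<Sum>j\<in>A. Q j x) (\<Sum>j\<in>A. Q j x) = (\<Sum>j\<in>A. cinner x (Q j x))"
proof -
  have "cinner (\<Sum>j\<in>A. Q j x) (\<Sum>j\<in>A. Q j x) = (\<Sum>j\<in>A. cinner (Q j x) (\<Sum>i\<in>A. Q i x))"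
    by (rule cinner_sum_left)
  also have "\<dots> = (\<Sum>j\<in>A. cinner x (Q j (\<Sum>i\<in>A. Q i x)))"
    by (rule sum.cong) (auto simp: proj_adj[OF proj])
  also have "\<dots> = (\<Sum>j\<in>A. cinner x (Q j x))"
    by (rule sum.cong) (auto simp: Q_sum_delta fA)
  finally show ?thesis .
qed

lemma Q_a_nonneg: "0 \<le> Re (cinner x (Q j x))"
  using proj_sq[OF proj, of x j] cinner_nonneg[of "Q j x"] by simp

lemma Q_partial_le: "hnorm (\<Sum>j<n. Q j x) \<le> hnorm x"
proof -
  define s where "s = (\<Sum>j<n. Q j x)"
  have "cinner s s = cinner x s" unfolding s_def
    using Q_sum_sq[of "{..<n}" x] cinner_sum_right[of x "\<lambda>j. Q j x" "{..<n}"] by simp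
  then have "(hnorm s)^2 \<le> hnorm x * hnorm s" using cs_Re[of x s] by (simp add: hnorm_sq)
  then have h: "hnorm s * hnorm s \<le> hnorm x * hnorm s" by (simp add: power2_eq_square)
  have "hnorm s \<le> hnorm x"
  proof (cases "hnorm s = 0")
    case True then show ?thesis using hnorm_nonneg[of x] by simp
  next
    case False then have "0 < hnorm s" using hnorm_nonneg[of s] by linarith
    then show ?thesis using h mult_le_cancel_right_pos by blast
  qed
  then show ?thesis by (simp add: s_def)
qed

lemma Q_conv: "\<exists>l. hconv (\<lambda>n. \<Sum>j<n. Q j x) l"
proof -
  define a where "a j = Re (cinner x (Q j x))" for j
  have sq: "(hnorm (\<Sum>j\<in>A. Q j x))^2 = (\<Sum>j\<in>A. a j)" if "finite A" for A
    using Q_sum_sq[OF that, of x] unfolding hnorm_sq a_def by simp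
  have "summable a"
  proof (rule summableI_nonneg_bounded)
    show "0 \<le> a n" for n unfolding a_def by (rule Q_a_nonneg)
    show "(\<Sum>i<n. a i) \<le> (hnorm x)^2" for n
      using sq[of "{..<n}"] power_mono[OF Q_partial_le[where n=n and x=x] hnorm_nonneg, of 2] by simp
  qed
  then have C: "\<forall>e>0. \<exists>N. \<forall>m\<ge>N. \<forall>n. norm (sum a {m..<n}) < e" by (simp add: summable_Cauchy)
  have "\<exists>K. \<forall>m\<ge>K. \<forall>n\<ge>K. hnorm ((\<Sum>j<m. Q j x) - (\<Sum>j<n. Q j x)) < e" if e: "e > 0" for e
  proof -
    obtain N where N: "\<And>m n. m \<ge> N \<Longrightarrow> norm (sum a {m..<n}) < e^2" using C e by (meson zero_less_power)
    have *: "hnorm ((\<Sum>j<n. Q j x) - (\<Sum>j<m. Q j x)) < e" if "N \<le> m" "m \<le> n" for m n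
    proof -
      have "(hnorm ((\<Sum>j<n. Q j x) - (\<Sum>j<m. Q j x)))^2 = sum a {m..<n}"
        using sq[of "{m..<n}"] by (simp add: sum_lessThan_diff that)
      also have "\<dots> < e^2" using N[of m n] that by simp
      finally show ?thesis using e by (simp add: power_less_imp_less_base)
    qed
    show ?thesis
    proof (intro exI allI impI)
      fix m n assume "N \<le> m" "N \<le> n"
      then show "hnorm ((\<Sum>j<m. Q j x) - (\<Sum>j<n. Q j x)) < e"
        using *[of m n] *[of n m] hnorm_commute[of "\<Sum>j<m. Q j x" "\<Sum>j<n. Q j x"]
        by (cases "m \<le> n") auto
    qed
  qed
  then obtain l where "(\<lambda>n. sqrt (Re (cinner ((\<Sum>j<n. Q j x) - l) ((\<Sum>j<n. Q j x) - l)))) \<longlonglongrightarrow> 0"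
    using cinner_complete[of "\<lambda>n. \<Sum>j<n. Q j x"] unfolding hnorm_def by blast
  then show ?thesis unfolding hconv_def hnorm_def by blast
qed

definition Qlim :: "'a \<Rightarrow> 'a" where
  "Qlim x = (SOME l. hconv (\<lambda>n. \<Sum>j<n. Q j x) l)"

lemma Qlim_conv: "hconv (\<lambda>n. \<Sum>j<n. Q j x) (Qlim x)"
  unfolding Qlim_def using Q_conv[of x] by (rule someI_ex)

lemma Qlim_eq: "hconv (\<lambda>n. \<Sum>j<n. Q j x) l \<Longrightarrow> Qlim x = l"
  using Qlim_conv hconv_unique by blast

lemma Qlim_projection: "projection Qlim"
proof -
  have add: "Qlim (x + y) = Qlim x + Qlim y" for x y
  proof (rule Qlim_eq)
    have "hconv (\<lambda>n. (\<Sum>j<n. Q j x) + (\<Sum>j<n. Q j y)) (Qlim x + Qlim y)"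
      by (intro hconv_add Qlim_conv)
    then show "hconv (\<lambda>n. \<Sum>j<n. Q j (x + y)) (Qlim x + Qlim y)"
      by (simp add: op_add[OF proj_bounded[OF proj]] sum.distrib)
  qed
  have sc: "Qlim (cscale a x) = cscale a (Qlim x)" for a x
  proof (rule Qlim_eq)
    have "hconv (\<lambda>n. cscale a (\<Sum>j<n. Q j x)) (cscale a (Qlim x))"
      by (intro hconv_cscale Qlim_conv)
    then show "hconv (\<lambda>n. \<Sum>j<n. Q j (cscale a x)) (cscale a (Qlim x))"
      by (simp add: op_cscale[OF proj_bounded[OF proj]] cscale_sum_right)
  qed
  have bd: "hnorm (Qlim x) \<le> 1 * hnorm x" for x
    using hconv_norm_le[OF Qlim_conv Q_partial_le] by simp
  have bo: "bounded_op Qlim" unfolding bounded_op_def using add sc bd by blast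
  have adj: "cinner (Qlim x) y = cinner x (Qlim y)" for x y
  proof -
    have l1: "(\<lambda>n. cinner (\<Sum>j<n. Q j x) y) \<longlonglongrightarrow> cinner (Qlim x) y"
      by (rule hconv_cinner[OF Qlim_conv])
    have "(\<lambda>n. cnj (cinner (\<Sum>j<n. Q j y) x)) \<longlonglongrightarrow> cnj (cinner (Qlim y) x)"
      by (intro tendsto_cnj hconv_cinner[OF Qlim_conv])
    moreover have "cnj (cinner (\<Sum>j<n. Q j y) x) = cinner (\<Sum>j<n. Q j x) y" for n
    proof -
      have "cnj (cinner (\<Sum>j<n. Q j y) x) = cinner x (\<Sum>j<n. Q j y)" by (simp flip: cinner_cnj)
      also have "\<dots> = cinner (\<Sum>j<n. Q j x) y"
        by (simp add: cinner_sum_left cinner_sum_right proj_adj[OF proj])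
      finally show ?thesis .
    qed
    ultimately have "(\<lambda>n. cinner (\<Sum>j<n. Q j x) y) \<longlonglongrightarrow> cinner x (Qlim y)"
      by (simp flip: cinner_cnj)
    then show ?thesis using l1 LIMSEQ_unique by blast
  qed
  have qj: "Q j (Qlim x) = Q j x" for j x
  proof -
    have h1: "hconv (\<lambda>n. Q j (\<Sum>i<n. Q i x)) (Q j (Qlim x))"
      by (rule hconv_op[OF proj_bounded[OF proj] Qlim_conv])
    have h2: "hconv (\<lambda>n. Q j (\<Sum>i<n. Q i x)) (Q j x)"
      by (rule hconv_cong[OF hconv_const, where N="Suc j"]) (simp add: Q_sum_delta)
    show ?thesis using hconv_unique[OF h1 h2] .
  qed
  have idem: "Qlim (Qlim x) = Qlim x" for x
  proof (rule Qlim_eq)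
    show "hconv (\<lambda>n. \<Sum>j<n. Q j (Qlim x)) (Qlim x)" using Qlim_conv[of x] by (simp add: qj)
  qed
  show ?thesis unfolding projection_def is_adjoint_def
    using bo adj idem by (auto simp: fun_eq_iff)
qed

end

lemma vna_add: "von_neumann_algebra M \<Longrightarrow> S \<in> M \<Longrightarrow> T \<in> M \<Longrightarrow> (\<lambda>x. S x + T x) \<in> M"
  unfolding von_neumann_algebra_def by simp
lemma vna_scale: "von_neumann_algebra M \<Longrightarrow> T \<in> M \<Longrightarrow> (\<lambda>x. cscale a (T x)) \<in> M"
  unfolding von_neumann_algebra_def by simp
lemma vna_id: "von_neumann_algebra M \<Longrightarrow> id \<in> M"
  unfolding von_neumann_algebra_def by simp
lemma vna_sot: "von_neumann_algebra M \<Longrightarrow> sot_closed M"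
  unfolding von_neumann_algebra_def by simp

lemma zero_in_vna: "von_neumann_algebra M \<Longrightarrow> (\<lambda>x. 0::'a::chilbert) \<in> M"
  using vna_scale[OF _ vna_id, of M 0] by simp

lemma sum_in_vna:
  assumes M: "von_neumann_algebra M" and "\<And>j. j \<in> A \<Longrightarrow> S j \<in> M" and "finite A"
  shows "(\<lambda>x. \<Sum>j\<in>A. S j x) \<in> M"
  using assms(3,2)
proof (induct A rule: finite_induct)
  case empty then show ?case using zero_in_vna[OF M] by simp
next
  case (insert a A)
  then have "(\<lambda>x. S a x + (\<Sum>j\<in>A. S j x)) \<in> M" by (intro vna_add[OF M]) auto
  then show ?case using insert by simp
qed

lemma sot_limit_in_vna:
  assumes M: "von_neumann_algebra M" and L: "bounded_op L" and S: "\<And>n. S n \<in> M"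
    and c: "\<And>x. hconv (\<lambda>n. S n x) (L x)"
  shows "L \<in> M"
proof -
  have "\<exists>T\<in>M. \<forall>x\<in>F. hnorm (L x - T x) < e" if "finite F" "e > 0" for F e
  proof -
    have "\<forall>x\<in>F. eventually (\<lambda>n. hnorm (S n x - L x) < e) sequentially"
    proof
      fix x assume "x \<in> F"
      show "eventually (\<lambda>n. hnorm (S n x - L x) < e) sequentially"
        using order_tendstoD(2)[OF c[of x, unfolded hconv_def] that(2)] .
    qed
    then have "eventually (\<lambda>n. \<forall>x\<in>F. hnorm (S n x - L x) < e) sequentially"
      by (rule eventually_ball_finite[OF that(1)])
    then obtain n where n: "\<forall>x\<in>F. hnorm (S n x - L x) < e" unfolding eventually_sequentially by blast
    have "\<forall>x\<in>F. hnorm (L x - S n x) < e"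
    proof
      fix x assume "x \<in> F" then show "hnorm (L x - S n x) < e" using n hnorm_commute[of "L x" "S n x"] by simp
    qed
    then show ?thesis using S[of n] by blast
  qed
  then show ?thesis using L vna_sot[OF M] unfolding sot_closed_def by blast
qed



lemma cscale_two: "cscale 2 x = x + (x::'a::chilbert)"
  using cscale_add_left[of 1 1 x] by (simp add: cscale_one)

lemma parallelogram:
  "Re (cinner (u - v) (u - v)) + Re (cinner (u + v) (u + v)) = 2 * Re (cinner u u) + 2 * Re (cinner v (v::'a::chilbert))"
  using expand_diff[of u 1 v] expand_add[of u v] by (simp add: cscale_one)

lemma sq_le_of_hnorm_le: "hnorm a \<le> hnorm b \<Longrightarrow> Re (cinner a a) \<le> Re (cinner b (b::'a::chilbert))"
  using power_mono[of "hnorm a" "hnorm b" 2] by (simp add: hnorm_sq)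

lemma arith1:
  fixes d a b c \<delta> :: real
  assumes "0 \<le> d" "0 \<le> a" "0 \<le> b" "a < d + \<delta>" "b < d + \<delta>" "0 < \<delta>" "\<delta> \<le> 1" "2 * d \<le> c"
  shows "2 * a^2 + 2 * b^2 - c^2 \<le> 4 * \<delta> * (2 * d + 1)"
proof -
  have "a^2 \<le> (d + \<delta>)^2" using assms by (intro power_mono) auto
  moreover have "b^2 \<le> (d + \<delta>)^2" using assms by (intro power_mono) auto
  moreover have "(2*d)^2 \<le> c^2" using assms by (intro power_mono) auto
  moreover have "\<delta>^2 \<le> \<delta>" using assms by (simp add: power2_eq_square mult_left_le_one_le)
  ultimately show ?thesis by (simp add: power2_eq_square algebra_simps)
qed

lemma orth_of_min:
  fixes S :: "'a::chilbert set"
  assumes Sadd: "\<And>x y. x\<in>S \<Longrightarrow> y\<in>S \<Longrightarrow> x+y \<in> S" and Ssc: "\<And>a x. x\<in>S \<Longrightarrow> cscale a x \<in> S"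
    and p: "p \<in> S" and min: "\<And>s. s \<in> S \<Longrightarrow> hnorm (x - p) \<le> hnorm (x - s)"
    and s: "s \<in> S"
  shows "cinner s (x - p) = 0"
proof -
  define u where "u = x - p"
  have re0: "Re (cinner u s') = 0" if s': "s' \<in> S" for s'
  proof -
    define A where "A = Re (cinner u u)"
    define B where "B = Re (cinner u s')"
    define C where "C = Re (cinner s' s')"
    have ineq: "A \<le> A - 2 * t * B + t^2 * C" for t
    proof -
      have "p + cscale (complex_of_real t) s' \<in> S" using Sadd Ssc p s' by blast
      then have "hnorm u \<le> hnorm (u - cscale (complex_of_real t) s')"
        using min unfolding u_def by (metis diff_diff_eq)
      then show ?thesis using sq_le_of_hnorm_le expand_diff[of u t s'] unfolding A_def B_def C_def by metis
    qed
    show ?thesis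
    proof (cases "C = 0")
      case True
      then have "s' = 0" unfolding C_def using Re_cinner_self_eq_0 by blast
      then show ?thesis by simp
    next
      case False
      then have C: "C > 0" using cinner_nonneg[of s'] unfolding C_def by linarith
      have "A \<le> A - 2 * (B/C) * B + (B/C)^2 * C" by (rule ineq)
      also have "\<dots> = A - B^2 / C" using C by (simp add: power2_eq_square field_simps)
      finally have "B^2 / C \<le> 0" by simp
      then have "B^2 \<le> 0" using C by (simp add: divide_le_0_iff)
      then show ?thesis unfolding B_def by simp
    qed
  qed
  have "Re (cinner s u) = 0" using re0[OF s] by (simp add: Re_cinner_commute)
  moreover have "Re (cinner (cscale \<i> s) u) = 0" using re0[OF Ssc[OF s]] by (simp add: Re_cinner_commute)
  then have "Im (cinner s u) = 0" by (simp add: cinner_cscale_left)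
  ultimately show ?thesis unfolding u_def by (simp add: complex_eq_iff)
qed

context
  fixes S :: "'a::chilbert set"
  assumes S0: "0 \<in> S"
    and Sadd: "\<And>x y. x\<in>S \<Longrightarrow> y\<in>S \<Longrightarrow> x+y \<in> S"
    and Ssc: "\<And>a x. x\<in>S \<Longrightarrow> cscale a x \<in> S"
    and Scl: "\<And>x. (\<And>e. e>0 \<Longrightarrow> \<exists>y\<in>S. hnorm (x-y) < e) \<Longrightarrow> x \<in> S"
begin

lemma nearest_exists: "\<exists>p\<in>S. \<forall>s\<in>S. hnorm (x - p) \<le> hnorm (x - s)"
proof -
  define D where "D = (\<lambda>s. hnorm (x - s)) ` S"
  define d where "d = Inf D"
  have bdd: "bdd_below D" unfolding D_def by (rule bdd_belowI[of _ 0]) auto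
  have Dne: "D \<noteq> {}" using S0 unfolding D_def by blast
  have dle: "d \<le> hnorm (x - s)" if "s \<in> S" for s
    unfolding d_def using that bdd by (intro cInf_lower) (auto simp: D_def)
  have d0: "0 \<le> d" unfolding d_def by (rule cInf_greatest[OF Dne]) (auto simp: D_def)
  have ex: "\<forall>n. \<exists>s. s \<in> S \<and> hnorm (x - s) < d + inverse (real (Suc n))"
  proof
    fix n
    have "Inf D < d + inverse (real (Suc n))" unfolding d_def by simp
    then obtain z where "z \<in> D" "z < d + inverse (real (Suc n))" using cInf_lessD[OF Dne] by blast
    then show "\<exists>s. s \<in> S \<and> hnorm (x - s) < d + inverse (real (Suc n))" unfolding D_def by blast
  qed
  then obtain s where s: "\<forall>n. s n \<in> S \<and> hnorm (x - s n) < d + inverse (real (Suc n))"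
    using choice[OF ex] by blast
  then have sS: "\<And>n. s n \<in> S" and sd: "\<And>n. hnorm (x - s n) < d + inverse (real (Suc n))" by auto
  have key: "hnorm (s m - s n) < e" if e: "e > 0" and K: "4 * (2*d+1) / e^2 < real (Suc K)"
      and m: "m \<ge> K" and n: "n \<ge> K" for e K m n
  proof -
    define \<delta> where "\<delta> = inverse (real (Suc K))"
    have \<delta>0: "0 < \<delta>" "\<delta> \<le> 1" unfolding \<delta>_def by (auto simp: field_simps)
    have im: "inverse (real (Suc m)) \<le> \<delta>" "inverse (real (Suc n)) \<le> \<delta>"
      unfolding \<delta>_def using m n by (auto simp: field_simps)
    define u where "u = x - s n"
    define v where "v = x - s m"
    have uv: "u - v = s m - s n" unfolding u_def v_def by (simp add: algebra_simps)
    have w: "u + v = cscale 2 (x - cscale (1/2) (s n + s m))"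
      unfolding u_def v_def cscale_diff_right cscale_cscale cscale_two by (simp add: cscale_one algebra_simps)
    have "s n + s m \<in> S" using Sadd sS by blast
    then have "d \<le> hnorm (x - cscale (1/2) (s n + s m))" using Ssc dle by blast
    then have c: "2 * d \<le> hnorm (u + v)" unfolding w by (simp add: hnorm_cscale)
    have "(hnorm (s m - s n))^2 = 2 * (hnorm u)^2 + 2 * (hnorm v)^2 - (hnorm (u+v))^2"
      using parallelogram[of u v] unfolding uv hnorm_sq by simp
    also have "\<dots> \<le> 4 * \<delta> * (2 * d + 1)"
    proof (rule arith1[OF d0 hnorm_nonneg hnorm_nonneg _ _ \<delta>0 c])
      show "hnorm u < d + \<delta>" using sd[of n] im unfolding u_def by linarith
      show "hnorm v < d + \<delta>" using sd[of m] im unfolding v_def by linarith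
    qed
    also have "\<dots> < e^2"
    proof -
      have "4 * (2*d+1) < e^2 * real (Suc K)" using K e by (simp add: field_simps)
      then show ?thesis unfolding \<delta>_def by (simp add: field_simps)
    qed
    finally show ?thesis using e by (simp add: power_less_imp_less_base)
  qed
  have "\<exists>K. \<forall>m\<ge>K. \<forall>n\<ge>K. hnorm (s m - s n) < e" if e: "e > 0" for e
  proof -
    obtain K where "4 * (2*d+1) / e^2 < real K" using reals_Archimedean2 by blast
    then have "4 * (2*d+1) / e^2 < real (Suc K)" by simp
    then show ?thesis using key[OF e] by blast
  qed
  then obtain p where "(\<lambda>n. sqrt (Re (cinner (s n - p) (s n - p)))) \<longlonglongrightarrow> 0"
    using cinner_complete[of s] unfolding hnorm_def by blast
  then have pc: "hconv s p" unfolding hconv_def hnorm_def by simp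
  have pS: "p \<in> S"
  proof (rule Scl)
    fix e :: real assume e: "e > 0"
    have "eventually (\<lambda>n. hnorm (s n - p) < e) sequentially"
      using order_tendstoD(2)[OF pc[unfolded hconv_def] e] .
    then obtain n where "hnorm (s n - p) < e" unfolding eventually_sequentially by blast
    then show "\<exists>y\<in>S. hnorm (p - y) < e" using sS[of n] hnorm_commute[of p "s n"] by (intro bexI[of _ "s n"]) auto
  qed
  have "hnorm (x - p) \<le> d"
  proof -
    have lim: "(\<lambda>n. d + inverse (real (Suc n)) + hnorm (s n - p)) \<longlonglongrightarrow> d + 0 + 0"
      using pc unfolding hconv_def by (intro tendsto_add tendsto_const LIMSEQ_inverse_real_of_nat)
    have "hnorm (x - p) \<le> d + inverse (real (Suc n)) + hnorm (s n - p)" for n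
      using hnorm_triangle_diff[of x p "s n"] sd[of n] by linarith
    then have "hnorm (x - p) \<le> d + 0 + 0" by (intro LIMSEQ_le_const[OF lim]) auto
    then show ?thesis by simp
  qed
  then show ?thesis
  proof (intro bexI[OF _ pS] ballI)
    fix t assume "hnorm (x - p) \<le> d" "t \<in> S"
    then show "hnorm (x - p) \<le> hnorm (x - t)" using dle[of t] by linarith
  qed
qed

lemma decomp_exists: "\<exists>p. p \<in> S \<and> (\<forall>s\<in>S. cinner s (x - p) = 0)"
proof -
  obtain p where p: "p \<in> S" and min: "\<And>s. s \<in> S \<Longrightarrow> hnorm (x - p) \<le> hnorm (x - s)"
    using nearest_exists[of x] by blast
  show ?thesis using orth_of_min[OF Sadd Ssc p min] p by blast
qed

lemma decomp_unique:
  assumes "p \<in> S" "\<forall>s\<in>S. cinner s (x - p) = 0" "q \<in> S" "\<forall>s\<in>S. cinner s (x - q) = 0"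
  shows "p = q"
proof -
  have "cscale (-1) q + q = 0" using cscale_add_left[of "-1" 1 q] by (simp add: cscale_one)
  then have m: "cscale (-1) q = - q" by (simp add: eq_neg_iff_add_eq_0)
  have "p + cscale (-1) q \<in> S" using assms Sadd Ssc by blast
  then have "p - q \<in> S" using m by simp
  then have "cinner (p - q) (x - q) - cinner (p - q) (x - p) = 0" using assms by simp
  then have "cinner (p - q) (p - q) = 0" by (simp add: cinner_diff_right[symmetric])
  then show ?thesis using cinner_eq_zero by force
qed

definition PS :: "'a \<Rightarrow> 'a" where
  "PS x = (SOME p. p \<in> S \<and> (\<forall>s\<in>S. cinner s (x - p) = 0))"

lemma PS: "PS x \<in> S" "\<forall>s\<in>S. cinner s (x - PS x) = 0"
  using someI_ex[OF decomp_exists[of x]] unfolding PS_def[symmetric] by auto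

lemma PS_eq: "p \<in> S \<Longrightarrow> \<forall>s\<in>S. cinner s (x - p) = 0 \<Longrightarrow> PS x = p"
  using decomp_unique PS by blast

lemma PS_projection: "projection PS \<and> range PS = S"
proof -
  have add: "PS (x + y) = PS x + PS y" for x y
  proof (rule PS_eq)
    show "PS x + PS y \<in> S" using PS Sadd by blast
    show "\<forall>s\<in>S. cinner s (x + y - (PS x + PS y)) = 0"
    proof
      fix s assume s: "s \<in> S"
      have "x + y - (PS x + PS y) = (x - PS x) + (y - PS y)" by (simp add: algebra_simps)
      then show "cinner s (x + y - (PS x + PS y)) = 0" using PS(2)[of x] PS(2)[of y] s by (simp only: cinner_add_right) simp
    qed
  qed
  have sc: "PS (cscale a x) = cscale a (PS x)" for a x
  proof (rule PS_eq)
    show "cscale a (PS x) \<in> S" using PS Ssc by blast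
    show "\<forall>s\<in>S. cinner s (cscale a x - cscale a (PS x)) = 0"
      using PS(2) by (simp flip: cscale_diff_right add: cinner_cscale_right)
  qed
  have fixp: "PS p = p" if "p \<in> S" for p using PS_eq[OF that] by simp
  have orth2: "cinner (PS x) (y - PS y) = 0" for x y using PS by blast
  have bd: "hnorm (PS x) \<le> 1 * hnorm x" for x
  proof -
    have "x = PS x + (x - PS x)" by simp
    then have "Re (cinner x x) = Re (cinner (PS x) (PS x)) + 2 * Re (cinner (PS x) (x - PS x)) + Re (cinner (x - PS x) (x - PS x))"
      using expand_add[of "PS x" "x - PS x"] by simp
    then have "Re (cinner (PS x) (PS x)) \<le> Re (cinner x x)" using orth2[of x x] cinner_nonneg[of "x - PS x"] by simp
    then have "(hnorm (PS x))^2 \<le> (hnorm x)^2" by (simp add: hnorm_sq)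
    then show ?thesis using power2_le_imp_le by simp
  qed
  have bo: "bounded_op PS" unfolding bounded_op_def using add sc bd by blast
  have adj: "cinner (PS x) y = cinner x (PS y)" for x y
  proof -
    have "cinner (PS x) y = cinner (PS x) (PS y)" using orth2[of x y] by (simp add: cinner_diff_right)
    moreover have "cinner (x - PS x) (PS y) = 0" using orth2[of y x] cinner_cnj[of "x - PS x" "PS y"] by simp
    then have "cinner x (PS y) = cinner (PS x) (PS y)" by (simp add: cinner_diff_left)
    ultimately show ?thesis by simp
  qed
  have "range PS \<subseteq> S" using PS(1) by blast
  moreover have "S \<subseteq> range PS"
  proof
    fix p assume "p \<in> S" then have "p = PS p" using fixp by simp
    then show "p \<in> range PS" by (rule image_eqI) simp
  qed
  ultimately have "range PS = S" by blast
  then show ?thesis unfolding projection_def is_adjoint_def using bo adj fixp PS(1) by (auto simp: fun_eq_iff)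
qed

end

lemma proj_same_range:
  assumes P: "projection P" and Q: "projection Q" and r: "range P = range (Q::'a::chilbert \<Rightarrow> 'a)"
  shows "P = Q"
proof
  fix x
  have QP: "Q (P y) = P y" for y
  proof -
    have "P y \<in> range Q" using r by blast
    then obtain z where "P y = Q z" by blast
    then show ?thesis using proj_idem[OF Q] by simp
  qed
  have PQ: "P (Q y) = Q y" for y
  proof -
    have "Q y \<in> range P" using r by blast
    then obtain z where "Q y = P z" by blast
    then show ?thesis using proj_idem[OF P] by simp
  qed
  have "cinner z (P x) = cinner z (Q x)" for z
  proof -
    have "cinner z (P x) = cinner z (Q (P x))" by (simp add: QP)
    also have "\<dots> = cinner (Q z) (P x)" by (simp add: proj_adj[OF Q])
    also have "\<dots> = cinner (P (Q z)) x" by (simp add: proj_adj[OF P])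
    also have "\<dots> = cinner (Q z) x" by (simp add: PQ)
    also have "\<dots> = cinner z (Q x)" by (simp add: proj_adj[OF Q])
    finally show ?thesis .
  qed
  then show "P x = Q x" by (rule cinner_ext)
qed

lemma range_proj_props:
  assumes T: "bounded_op (T::'a::chilbert \<Rightarrow> 'a)"
  shows "projection (range_proj T) \<and> range (range_proj T) = hclosure (range T)"
proof -
  define S where "S = hclosure (range T)"
  have mem: "x \<in> S \<longleftrightarrow> (\<forall>e>0. \<exists>y\<in>range T. hnorm (x - y) < e)" for x
    unfolding S_def hclosure_def by simp
  have S0: "0 \<in> S" unfolding mem using op_zero[OF T] by (metis hnorm_zero diff_self rangeI)
  have Sadd: "x + y \<in> S" if hx: "x \<in> S" and hy: "y \<in> S" for x y
    unfolding mem
  proof (intro allI impI)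
    fix e :: real assume e: "e > 0"
    obtain x' where x': "x' \<in> range T" "hnorm (x - x') < e/2" using hx e unfolding mem by (meson half_gt_zero)
    obtain y' where y': "y' \<in> range T" "hnorm (y - y') < e/2" using hy e unfolding mem by (meson half_gt_zero)
    obtain u v where "x' = T u" "y' = T v" using x'(1) y'(1) by blast
    then have "x' + y' = T (u + v)" using op_add[OF T] by simp
    then have "x' + y' \<in> range T" by simp
    moreover have "hnorm (x + y - (x' + y')) < e"
    proof -
      have eq: "x + y - (x' + y') = (x - x') + (y - y')" by (simp add: algebra_simps)
      show ?thesis unfolding eq using hnorm_triangle[of "x - x'" "y - y'"] x'(2) y'(2) by linarith
    qed
    ultimately show "\<exists>z\<in>range T. hnorm (x + y - z) < e" by blast
  qed
  have Ssc: "cscale a x \<in> S" if hx: "x \<in> S" for a x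
  proof (cases "a = 0")
    case True then show ?thesis using S0 by simp
  next
    case False
    then have ca: "cmod a > 0" by simp
    show ?thesis unfolding mem
    proof (intro allI impI)
      fix e :: real assume e: "e > 0"
      obtain x' where x': "x' \<in> range T" "hnorm (x - x') < e / cmod a"
        using hx e ca unfolding mem by (meson divide_pos_pos)
      obtain u where "x' = T u" using x'(1) by blast
      then have "cscale a x' = T (cscale a u)" using op_cscale[OF T] by simp
      then have "cscale a x' \<in> range T" by simp
      moreover have "hnorm (cscale a x - cscale a x') < e"
        using x'(2) ca by (simp add: hnorm_cscale field_simps flip: cscale_diff_right)
      ultimately show "\<exists>z\<in>range T. hnorm (cscale a x - z) < e" by blast
    qed
  qed
  have Scl: "x \<in> S" if h: "\<And>e. e>0 \<Longrightarrow> \<exists>y\<in>S. hnorm (x-y) < e" for x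
    unfolding mem
  proof (intro allI impI)
    fix e :: real assume e: "e > 0"
    obtain y where y: "y \<in> S" "hnorm (x - y) < e/2" using h[of "e/2"] e by auto
    obtain z where z: "z \<in> range T" "hnorm (y - z) < e/2" using y(1) e unfolding mem by (meson half_gt_zero)
    have "hnorm (x - z) < e" using hnorm_triangle_diff[of x z y] y(2) z(2) by linarith
    then show "\<exists>z\<in>range T. hnorm (x - z) < e" using z(1) by blast
  qed
  have ex: "projection (PS S) \<and> range (PS S) = S"
    by (rule PS_projection[OF S0 Sadd Ssc Scl]) auto
  have "\<exists>!P. projection P \<and> range P = S"
    using ex proj_same_range by blast
  then show ?thesis unfolding range_proj_def S_def[symmetric] by (rule theI')
qed



lemma sum_even_odd: "(\<Sum>i<2*(n::nat). (if even i then f (i div 2) else g (i div 2))) = (\<Sum>i<n. f i) + (\<Sum>i<n. (g i::'a::comm_monoid_add))"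
  by (induct n) (simp_all add: algebra_simps)

lemma proj_zero: "projection (\<lambda>x. 0::'a::chilbert)"
proof -
  have "bounded_op (\<lambda>x. 0::'a)" unfolding bounded_op_def
    by (intro conjI allI exI[of _ 0]) simp_all
  then show ?thesis unfolding projection_def is_adjoint_def by (simp add: fun_eq_iff)
qed

lemma proj_under:
  fixes R T :: "'a::chilbert \<Rightarrow> 'a" and Q :: "nat \<Rightarrow> 'a \<Rightarrow> 'a"
  assumes R: "projection R" and Qs: "\<And>k. k < n \<Longrightarrow> projection (Q k)"
    and bT: "\<And>x. T x = (\<Sum>k<n. Q k x)" and rng: "\<And>x. T x \<in> range R" and k: "k < n"
  shows "Q k z = R (Q k z)"
proof -
  have Qk0: "Q k (y - R y) = 0" for y
  proof -
    define u where "u = y - R y"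
    obtain w where w: "T u = R w" using rng[of u] by blast
    have "cinner u (T u) = cinner u (R w)" using w by simp
    also have "\<dots> = cinner y (R w) - cinner (R y) (R w)" unfolding u_def by (simp add: cinner_diff_left)
    also have "\<dots> = 0" by (simp add: proj_adj[OF R] proj_idem[OF R])
    finally have "cinner u (T u) = 0" .
    moreover have "Re (cinner u (T u)) = (\<Sum>j<n. Re (cinner u (Q j u)))"
      unfolding bT cinner_sum_right by (simp add: Re_sum)
    ultimately have "(\<Sum>j<n. Re (cinner u (Q j u))) = 0" by simp
    moreover have "\<forall>j\<in>{..<n}. 0 \<le> Re (cinner u (Q j u))"
    proof
      fix j assume "j \<in> {..<n}" then have j: "j < n" by simp
      show "0 \<le> Re (cinner u (Q j u))" using proj_sq[OF Qs[OF j], of u] cinner_nonneg[of "Q j u"] by simp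
    qed
    ultimately have "\<forall>j\<in>{..<n}. Re (cinner u (Q j u)) = 0"
      using sum_nonneg_eq_0_iff[of "{..<n}" "\<lambda>j. Re (cinner u (Q j u))"] by blast
    then have "Re (cinner u (Q k u)) = 0" using k by blast
    then have "Re (cinner (Q k u) (Q k u)) = 0" by (simp only: proj_sq[OF Qs[OF k]])
    then show ?thesis unfolding u_def using Re_cinner_self_eq_0 by blast
  qed
  have QR: "Q k y = Q k (R y)" for y
  proof -
    have "Q k y = Q k (R y + (y - R y))" by simp
    also have "\<dots> = Q k (R y)" by (simp only: op_add[OF proj_bounded[OF Qs[OF k]]] Qk0) simp
    finally show ?thesis .
  qed
  have "cinner w (Q k z) = cinner w (R (Q k z))" for w
  proof -
    have "cinner w (Q k z) = cinner (Q k w) z" by (simp add: proj_adj[OF Qs[OF k]])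
    also have "\<dots> = cinner (Q k (R w)) z" by (simp flip: QR)
    also have "\<dots> = cinner (R w) (Q k z)" by (simp add: proj_adj[OF Qs[OF k]])
    also have "\<dots> = cinner w (R (Q k z))" by (simp add: proj_adj[OF R])
    finally show ?thesis .
  qed
  then show ?thesis by (rule cinner_ext)
qed

lemma orth_pieces:
  fixes A B R1 R2 :: "'a::chilbert \<Rightarrow> 'a"
  assumes A: "projection A" and B: "projection B" and R1: "projection R1" and R2: "projection R2"
    and AR: "\<And>z. A z = R1 (A z)" and BR: "\<And>z. B z = R2 (B z)"
    and RR: "\<And>z. R2 (R1 z) = 0"
  shows "A (B x) = 0"
proof -
  define v where "v = A (B x)"
  have "cinner v v = cinner (B x) (A v)" unfolding v_def by (simp add: proj_adj[OF A])
  also have "\<dots> = cinner (R2 (B x)) (R1 (A v))" by (simp flip: AR BR)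
  also have "\<dots> = cinner (B x) (R2 (R1 (A v)))" by (simp add: proj_adj[OF R2])
  also have "\<dots> = 0" by (simp add: RR)
  finally show ?thesis unfolding v_def using cinner_eq_zero by blast
qed

theorem lemma4p1:
  fixes M :: "('a::chilbert \<Rightarrow> 'a) set"
    and b :: "nat \<Rightarrow> 'a \<Rightarrow> 'a"
    and Nj :: "nat \<Rightarrow> nat"
  assumes "von_neumann_algebra M"
    and "\<forall>j. b j \<in> M \<and> positive_op (b j)"
    and "\<forall>i j. (i > j + 1 \<or> j > i + 1) \<longrightarrow> range_proj (b i) \<circ> range_proj (b j) = (\<lambda>x. 0)"
    and "\<forall>j. sum_of_projections M (Nj j) (b j)"
    and "bdd_above (range Nj)"
  shows "\<exists>B. sot_sums b B \<and> sum_of_projections M (2 * Sup (range Nj)) B"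
proof -
  note M = assms(1)
  define N where "N = Sup (range Nj)"
  have NjN: "Nj j \<le> N" for j unfolding N_def using assms(5) by (intro cSup_upper) auto
  obtain P where P: "\<forall>j. (\<forall>k<Nj j. P j k \<in> M \<and> projection (P j k)) \<and> b j = (\<lambda>x. \<Sum>k<Nj j. P j k x)"
    using choice[OF assms(4)[unfolded sum_of_projections_def]] by blast
  define P' where "P' j k = (if k < Nj j then P j k else (\<lambda>x. 0))" for j k
  have P'proj: "projection (P' j k)" for j k unfolding P'_def using P proj_zero by auto
  have P'M: "P' j k \<in> M" for j k unfolding P'_def using P zero_in_vna[OF M] by auto
  have bsum: "b j x = (\<Sum>k<N. P' j k x)" for j x
  proof -
    have "(\<Sum>k<N. P' j k x) = (\<Sum>k<N. if k < Nj j then P j k x else 0)"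
      unfolding P'_def by (rule sum.cong) auto
    also have "\<dots> = (\<Sum>k\<in>{k\<in>{..<N}. k < Nj j}. P j k x)"
      by (rule sum.inter_filter[OF finite_lessThan, symmetric])
    also have "{k\<in>{..<N}. k < Nj j} = {..<Nj j}" using NjN[of j] by auto
    finally show ?thesis using P by simp
  qed
  have bbd: "bounded_op (b j)" for j using assms(2) unfolding positive_op_def by blast
  let ?R = "\<lambda>j. range_proj (b j)"
  have Rp: "projection (?R j)" and Rr: "range (?R j) = hclosure (range (b j))" for j
    using range_proj_props[OF bbd] by auto
  have rngR: "b j x \<in> range (?R j)" for j x
  proof -
    have "\<forall>e>0. \<exists>y\<in>range (b j). hnorm (b j x - y) < e"
      by (intro allI impI bexI[of _ "b j x"]) auto
    then have "b j x \<in> hclosure (range (b j))" unfolding hclosure_def by blast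
    then show ?thesis using Rr by blast
  qed
  have P'R: "P' j k z = ?R j (P' j k z)" for j k z
  proof (cases "k < N")
    case True
    show ?thesis
    proof (rule proj_under[OF Rp, where T="b j" and n=N and Q="P' j"])
      show "\<And>k. k < N \<Longrightarrow> projection (P' j k)" by (rule P'proj)
      show "\<And>x. b j x = (\<Sum>k<N. P' j k x)" by (rule bsum)
      show "\<And>x. b j x \<in> range (?R j)" by (rule rngR)
      show "k < N" by (rule True)
    qed
  next
    case False
    then have "P' j k = (\<lambda>x. 0)" unfolding P'_def using NjN[of j] by auto
    then show ?thesis using op_zero[OF proj_bounded[OF Rp]] by simp
  qed
  have orth: "P' i k (P' j l x) = 0" if "i > j + 1 \<or> j > i + 1" for i j k l x
  proof (rule orth_pieces[OF P'proj P'proj Rp Rp P'R P'R])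
    have "?R j \<circ> ?R i = (\<lambda>x. 0)" using spec[OF spec[OF assms(3), of j], of i] that by linarith
    then show "?R j (?R i z) = 0" for z by (simp add: fun_eq_iff)
  qed
  define C where "C p k j = (if j mod 2 = p then P' j k else (\<lambda>x. 0))" for p k j :: nat
  have Cproj: "projection (C p k j)" for p k j unfolding C_def using P'proj proj_zero by auto
  have CM: "C p k j \<in> M" for p k j unfolding C_def using P'M zero_in_vna[OF M] by auto
  have Corth: "C p k i (C p k j x) = 0" if "i \<noteq> j" for p k i j x
  proof (cases "i mod 2 = p \<and> j mod 2 = p")
    case True
    then have "i mod 2 = j mod 2" by simp
    with that have "i > j + 1 \<or> j > i + 1" by presburger
    then show ?thesis unfolding C_def using True orth by simp
  next
    case False
    then show ?thesis unfolding C_def using op_zero[OF proj_bounded[OF P'proj]] by auto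
  qed
  define L where "L p k = Qlim (C p k)" for p k
  have Lproj: "projection (L p k)" for p k
    unfolding L_def by (rule Qlim_projection) (auto intro: Cproj Corth)
  have Lconv: "hconv (\<lambda>n. \<Sum>j<n. C p k j x) (L p k x)" for p k x
    unfolding L_def by (rule Qlim_conv) (auto intro: Cproj Corth)
  have LM: "L p k \<in> M" for p k
  proof (rule sot_limit_in_vna[OF M proj_bounded[OF Lproj]])
    show "(\<lambda>x. \<Sum>j<n. C p k j x) \<in> M" for n by (rule sum_in_vna[OF M]) (auto intro: CM)
    show "hconv (\<lambda>n. \<Sum>j<n. C p k j x) (L p k x)" for x by (rule Lconv)
  qed
  define PP where "PP i = (if even i then L 0 (i div 2) else L 1 (i div 2))" for i
  define B where "B = (\<lambda>x. \<Sum>i<2*N. PP i x)"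
  have Bx: "B x = (\<Sum>k<N. L 0 k x) + (\<Sum>k<N. L 1 k x)" for x
  proof -
    have "B x = (\<Sum>i<2*N. (if even i then (\<lambda>k. L 0 k x) (i div 2) else (\<lambda>k. L 1 k x) (i div 2)))"
      unfolding B_def PP_def by (rule sum.cong) auto
    then show ?thesis using sum_even_odd[where n=N and f="\<lambda>k. L 0 k x" and g="\<lambda>k. L 1 k x"] by simp
  qed
  have sop: "sum_of_projections M (2 * N) B"
    unfolding sum_of_projections_def B_def
  proof (intro exI[of _ PP] conjI allI impI)
    fix k assume "k < 2 * N"
    show "PP k \<in> M" unfolding PP_def using LM by simp
    show "projection (PP k)" unfolding PP_def using Lproj by simp
  qed simp
  have "sot_sums b B" unfolding sot_sums_def
  proof
    fix x
    have split: "P' j k x = C 0 k j x + C 1 k j x" for j k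
    proof -
      have "j mod 2 = 0 \<or> j mod 2 = 1" by presburger
      then show ?thesis unfolding C_def by auto
    qed
    have "(\<Sum>j<n. b j x) = (\<Sum>k<N. (\<Sum>j<n. C 0 k j x) + (\<Sum>j<n. C 1 k j x))" for n
    proof -
      have "(\<Sum>j<n. b j x) = (\<Sum>j<n. \<Sum>k<N. P' j k x)" by (simp add: bsum)
      also have "\<dots> = (\<Sum>k<N. \<Sum>j<n. P' j k x)" by (rule sum.swap)
      also have "\<dots> = (\<Sum>k<N. (\<Sum>j<n. C 0 k j x) + (\<Sum>j<n. C 1 k j x))"
        by (simp add: split sum.distrib)
      finally show ?thesis .
    qed
    moreover have "hconv (\<lambda>n. \<Sum>k<N. (\<Sum>j<n. C 0 k j x) + (\<Sum>j<n. C 1 k j x)) (\<Sum>k<N. L 0 k x + L 1 k x)"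
      by (rule hconv_sum) (auto intro: hconv_add Lconv)
    ultimately have "hconv (\<lambda>n. \<Sum>j<n. b j x) (B x)" by (simp add: Bx sum.distrib)
    then show "(\<lambda>n. hnorm ((\<Sum>j<n. b j x) - B x)) \<longlonglongrightarrow> 0" unfolding hconv_def .
  qed
  then show ?thesis using sop unfolding N_def by blast
qed


end
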